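(* Let $G$ be a Borel groupoid with a Borel Haar system $\{\lambda^u\}_{u\in G^{(0)}}$. Let $\{Y_i\}_{i=1}^\infty$ be a countable cover of $G^{(0)}$ by invariant Borel subsets such that each reduction $G|_{Y_i}$ is Borel amenable. Then $G$ is Borel amenable.
   Context: All Borel spaces are analytic. A Borel Haar system is a family of measures $\lambda^u$ on $G^u=r^{-1}(u)$ with $u\mapsto\int f\,d\lambda^u$ Borel for nonnegative Borel $f$ and $\gamma\cdot\lambda^{s(\gamma)}=\lambda^{r(\gamma)}$. $Y\subset G^{(0)}$ is invariant if $s(\gamma)\in Y$ iff $r(\gamma)\in Y$; $G|_Y=\{\gamma: r(\gamma),s(\gamma)\in Y\}$. A Borel groupoid $H$ is Borel amenable if there is a sequence of Borel systems $\{m_n^u\}_{u\in H^{(0)}}$ of probability measures, $m_n^u$ supported on $H^u$, $u\mapsto\int f\,dm_n^u$ Borel for nonnegative Borel $f$, with $\|\gamma\cdot m_n^{s(\gamma)}-m_n^{r(\gamma)}\|_1\to0$ for all $\gamma\in H$. *)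

theory Defs
  imports "HOL-Probability.Probability"
begin

text \<open>A subset of the real line is analytic if it is empty or a continuous image of
  the Baire space (nat \<Rightarrow> nat, product topology of discrete spaces).\<close>
definition analytic_set_real :: "real set \<Rightarrow> bool" where
  "analytic_set_real A \<longleftrightarrow> A = {} \<or>
     (\<exists>g :: (nat \<Rightarrow> nat) \<Rightarrow> real. continuous_on UNIV g \<and> range g = A)"

definition analytic_borel_space :: "'a measure \<Rightarrow> bool" where
  "analytic_borel_space M \<longleftrightarrow>
     (\<exists>f A. analytic_set_real A \<and> bij_betw f (space M) A \<and>
        sets M = {f -` B \<inter> space M | B. B \<in> sets borel})"

text \<open>Arrows form the measurable space G; the unit space U is a subset of the arrows;
  r, s range, source; gmul composition (defined on pairs with s x = r y); ginv inverse.\<close>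
definition composable_pairs :: "'a measure \<Rightarrow> ('a \<Rightarrow> 'a) \<Rightarrow> ('a \<Rightarrow> 'a) \<Rightarrow> ('a \<times> 'a) set" where
  "composable_pairs G r s = {(x, y). x \<in> space G \<and> y \<in> space G \<and> s x = r y}"

definition borel_groupoid ::
  "'a measure \<Rightarrow> 'a set \<Rightarrow> ('a \<Rightarrow> 'a) \<Rightarrow> ('a \<Rightarrow> 'a) \<Rightarrow> ('a \<Rightarrow> 'a \<Rightarrow> 'a) \<Rightarrow> ('a \<Rightarrow> 'a) \<Rightarrow> bool"
where
  "borel_groupoid G U r s gmul ginv \<longleftrightarrow>
     analytic_borel_space G \<and>
     U \<in> sets G \<and>
     (\<forall>x\<in>space G. r x \<in> U \<and> s x \<in> U) \<and>
     (\<forall>u\<in>U. r u = u \<and> s u = u) \<and>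
     (\<forall>x\<in>space G. \<forall>y\<in>space G. s x = r y \<longrightarrow>
        gmul x y \<in> space G \<and> r (gmul x y) = r x \<and> s (gmul x y) = s y) \<and>
     (\<forall>x\<in>space G. \<forall>y\<in>space G. \<forall>z\<in>space G. s x = r y \<longrightarrow> s y = r z \<longrightarrow>
        gmul (gmul x y) z = gmul x (gmul y z)) \<and>
     (\<forall>x\<in>space G. gmul (r x) x = x \<and> gmul x (s x) = x) \<and>
     (\<forall>x\<in>space G. ginv x \<in> space G \<and> r (ginv x) = s x \<and> s (ginv x) = r x \<and>
        gmul x (ginv x) = r x \<and> gmul (ginv x) x = s x) \<and>
     r \<in> measurable G G \<and> s \<in> measurable G G \<and> ginv \<in> measurable G G \<and>
     (\<lambda>(x, y). gmul x y) \<in> measurable (restrict_space (G \<Otimes>\<^sub>M G) (composable_pairs G r s)) G"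

definition translate ::
  "'a measure \<Rightarrow> ('a \<Rightarrow> 'a) \<Rightarrow> ('a \<Rightarrow> 'a) \<Rightarrow> ('a \<Rightarrow> 'a \<Rightarrow> 'a) \<Rightarrow> 'a \<Rightarrow> 'a measure \<Rightarrow> 'a measure"
where
  "translate G r s gmul x \<mu> = measure_of (space G) (sets G)
     (\<lambda>A. emeasure \<mu> {y \<in> space G. r y = s x \<and> gmul x y \<in> A})"

definition tv_norm :: "'a measure \<Rightarrow> 'a measure \<Rightarrow> 'a measure \<Rightarrow> real" where
  "tv_norm G \<mu> \<nu> = (SUP P \<in> {P. finite P \<and> P \<subseteq> sets G \<and> disjoint P}.
       \<Sum>A\<in>P. \<bar>measure \<mu> A - measure \<nu> A\<bar>)"

definition borel_haar_system ::
  "'a measure \<Rightarrow> 'a set \<Rightarrow> ('a \<Rightarrow> 'a) \<Rightarrow> ('a \<Rightarrow> 'a) \<Rightarrow> ('a \<Rightarrow> 'a \<Rightarrow> 'a) \<Rightarrow> ('a \<Rightarrow> 'a measure) \<Rightarrow> bool"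
where
  "borel_haar_system G U r s gmul lam \<longleftrightarrow>
     (\<forall>u\<in>U. sets (lam u) = sets G \<and> emeasure (lam u) (space G - {x \<in> space G. r x = u}) = 0) \<and>
     (\<forall>f \<in> borel_measurable G. (\<lambda>u. \<integral>\<^sup>+ x. f x \<partial>lam u) \<in> borel_measurable (restrict_space G U)) \<and>
     (\<forall>x\<in>space G. translate G r s gmul x (lam (s x)) = lam (r x))"

definition invariant_set :: "'a measure \<Rightarrow> 'a set \<Rightarrow> ('a \<Rightarrow> 'a) \<Rightarrow> ('a \<Rightarrow> 'a) \<Rightarrow> 'a set \<Rightarrow> bool" where
  "invariant_set G U r s Y \<longleftrightarrow> Y \<subseteq> U \<and> (\<forall>x\<in>space G. s x \<in> Y \<longleftrightarrow> r x \<in> Y)"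

text \<open>Borel amenability of the reduction G|_Y = {x. r x \<in> Y \<and> s x \<in> Y}, with unit space Y.
  Measures on G|_Y are represented as measures on G supported on (G|_Y)^u.
  For Y = U this is Borel amenability of G itself.\<close>
definition borel_amenable_reduction ::
  "'a measure \<Rightarrow> ('a \<Rightarrow> 'a) \<Rightarrow> ('a \<Rightarrow> 'a) \<Rightarrow> ('a \<Rightarrow> 'a \<Rightarrow> 'a) \<Rightarrow> 'a set \<Rightarrow> bool"
where
  "borel_amenable_reduction G r s gmul Y \<longleftrightarrow>
     (\<exists>m :: nat \<Rightarrow> 'a \<Rightarrow> 'a measure.
        (\<forall>n. \<forall>u\<in>Y. prob_space (m n u) \<and> sets (m n u) = sets G \<and>
             emeasure (m n u) (space G - {x \<in> space G. r x = u \<and> s x \<in> Y}) = 0) \<and>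
        (\<forall>n. \<forall>f \<in> borel_measurable G.
             (\<lambda>u. \<integral>\<^sup>+ x. f x \<partial>m n u) \<in> borel_measurable (restrict_space G Y)) \<and>
        (\<forall>x\<in>space G. r x \<in> Y \<and> s x \<in> Y \<longrightarrow>
             (\<lambda>n. tv_norm G (translate G r s gmul x (m n (s x))) (m n (r x))) \<longlonglongrightarrow> 0))"

end

theory Submission
  imports Defs
begin

theorem lemma3p3:
  fixes G :: "'a measure" and U :: "'a set" and r s ginv :: "'a \<Rightarrow> 'a"
    and gmul :: "'a \<Rightarrow> 'a \<Rightarrow> 'a" and lam :: "'a \<Rightarrow> 'a measure" and Y :: "nat \<Rightarrow> 'a set"
  assumes "borel_groupoid G U r s gmul ginv"
    and "borel_haar_system G U r s gmul lam"
    and "\<And>i. Y i \<in> sets G"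
    and "\<And>i. invariant_set G U r s (Y i)"
    and "(\<Union>i. Y i) = U"
    and "\<And>i. borel_amenable_reduction G r s gmul (Y i)"
  shows "borel_amenable_reduction G r s gmul U"
proof -
  have UG: "U \<in> sets G" using assms(1) unfolding borel_groupoid_def by blast
  have rsU: "\<And>x. x \<in> space G \<Longrightarrow> r x \<in> U \<and> s x \<in> U"
    using assms(1) unfolding borel_groupoid_def by blast
  have YU: "\<And>i. Y i \<subseteq> U" and inv: "\<And>i x. x \<in> space G \<Longrightarrow> s x \<in> Y i \<longleftrightarrow> r x \<in> Y i"
    using assms(4) unfolding invariant_set_def by blast+
  define P where "P i m \<longleftrightarrow>
        (\<forall>n. \<forall>u\<in>Y i. prob_space (m n u) \<and> sets (m n u) = sets G \<and>
             emeasure (m n u) (space G - {x \<in> space G. r x = u \<and> s x \<in> Y i}) = 0) \<and>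
        (\<forall>n. \<forall>f \<in> borel_measurable G.
             (\<lambda>u. \<integral>\<^sup>+ x. f x \<partial>m n u) \<in> borel_measurable (restrict_space G (Y i))) \<and>
        (\<forall>x\<in>space G. r x \<in> Y i \<and> s x \<in> Y i \<longrightarrow>
             (\<lambda>n. tv_norm G (translate G r s gmul x (m n (s x))) (m n (r x))) \<longlonglongrightarrow> 0)" for i m
  have "\<forall>i. \<exists>m. P i m" using assms(6) unfolding borel_amenable_reduction_def P_def by blast
  then obtain M where M: "\<And>i. P i (M i)" by metis
  define idx where "idx u = (LEAST i. u \<in> Y i)" for u
  have idxY: "u \<in> Y (idx u)" if "u \<in> U" for u
    proof -
    obtain i where "u \<in> Y i" using \<open>u \<in> U\<close> assms(5) by blast
    then show ?thesis unfolding idx_def by (rule LeastI)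
  qed
  have idx_eq: "idx u = i \<longleftrightarrow> u \<in> Y i \<and> (\<forall>j<i. u \<notin> Y j)" if "u \<in> U" for u i
  proof
    assume "idx u = i" then show "u \<in> Y i \<and> (\<forall>j<i. u \<notin> Y j)"
      using idxY[OF that] unfolding idx_def by (auto dest: not_less_Least)
  next
    assume "u \<in> Y i \<and> (\<forall>j<i. u \<notin> Y j)" then show "idx u = i"
      unfolding idx_def by (intro Least_equality) (auto simp: not_less[symmetric])
  qed
  have idx_rs: "idx (r x) = idx (s x)" if "x \<in> space G" for x
    unfolding idx_def using inv[OF that] by simp
  define Z where "Z i = {u \<in> U. idx u = i}" for i
  have Zeq: "Z i = Y i - (\<Union>j\<in>{..<i}. Y j)" for i
    unfolding Z_def using idx_eq YU by fastforce
  have Zsets: "Z i \<in> sets G" for i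
    unfolding Zeq using assms(3) by auto
  define m where "m n u = M (idx u) n u" for n u
  show ?thesis
    unfolding borel_amenable_reduction_def
  proof (intro exI[of _ m] conjI ballI allI impI)
    fix n u assume u: "u \<in> U"
    let ?i = "idx u"
    have Pi: "P ?i (M ?i)" by (rule M)
    have uY: "u \<in> Y ?i" by (rule idxY[OF u])
    have seteq: "{x \<in> space G. r x = u \<and> s x \<in> Y ?i} = {x \<in> space G. r x = u \<and> s x \<in> U}"
      using inv uY YU rsU by blast
    show "prob_space (m n u)" "sets (m n u) = sets G"
      "emeasure (m n u) (space G - {x \<in> space G. r x = u \<and> s x \<in> U}) = 0"
      using Pi uY unfolding m_def P_def seteq[symmetric] by auto
  next
    fix n and f :: "'a \<Rightarrow> ennreal" assume f: "f \<in> borel_measurable G"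
    show "(\<lambda>u. \<integral>\<^sup>+ x. f x \<partial>m n u) \<in> borel_measurable (restrict_space G U)"
    proof (rule measurable_piecewise_restrict[where C="range Z"])
      show "countable (range Z)" by simp
      show "\<Omega> \<inter> space (restrict_space G U) \<in> sets (restrict_space G U)" if "\<Omega> \<in> range Z" for \<Omega>
        using that Zsets UG by (auto simp: space_restrict_space sets_restrict_space_iff)
      show "space (restrict_space G U) \<subseteq> \<Union> (range Z)"
        by (auto simp: space_restrict_space Z_def)
      show "(\<lambda>u. \<integral>\<^sup>+ x. f x \<partial>m n u) \<in> borel_measurable (restrict_space (restrict_space G U) \<Omega>)"
        if "\<Omega> \<in> range Z" for \<Omega>
      proof -
        obtain i where i: "\<Omega> = Z i" using \<open>\<Omega> \<in> range Z\<close> by blast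
        have rr: "restrict_space (restrict_space G U) \<Omega> = restrict_space G (U \<inter> Z i)"
          unfolding i using UG Zsets[of i] by (intro restrict_restrict_space) (auto simp: sets.Int_space_eq2)
        have g: "(\<lambda>u. \<integral>\<^sup>+ x. f x \<partial>M i n u) \<in> borel_measurable (restrict_space G (Y i))"
          using M[of i] f unfolding P_def by blast
        have g2: "(\<lambda>u. \<integral>\<^sup>+ x. f x \<partial>M i n u) \<in> borel_measurable (restrict_space G (U \<inter> Z i))"
          by (rule measurable_restrict_mono[OF g]) (auto simp: Z_def idxY)
        show ?thesis unfolding rr
          by (rule measurable_cong[THEN iffD1, OF _ g2]) (auto simp: space_restrict_space m_def Z_def)
      qed
    qed
  next
    fix x assume x: "x \<in> space G" and rs: "r x \<in> U \<and> s x \<in> U"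
    let ?i = "idx (r x)"
    have Pi: "P ?i (M ?i)" by (rule M)
    have ry: "r x \<in> Y ?i" using idxY rs by blast
    have sy: "s x \<in> Y ?i" using ry inv[OF x] by blast
    have "(\<lambda>n. tv_norm G (translate G r s gmul x (M ?i n (s x))) (M ?i n (r x))) \<longlonglongrightarrow> 0"
      using Pi x ry sy unfolding P_def by blast
    then show "(\<lambda>n. tv_norm G (translate G r s gmul x (m n (s x))) (m n (r x))) \<longlonglongrightarrow> 0"
      unfolding m_def idx_rs[OF x] by simp
  qed
qed

end
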